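(* Let $d\geq 2$ and let $\mathcal{H}_1,\mathcal{H}_2,\mathcal{H}_3,\mathcal{H}_4$ each be $\mathbb{C}^d$, with Alice holding $\mathcal{H}_A=\mathcal{H}_1\otimes\mathcal{H}_3$ and Bob holding $\mathcal{H}_B=\mathcal{H}_2\otimes\mathcal{H}_4$. For real $\epsilon,\delta$ let $$\rho=\mathbb{1}_{12}\otimes\mathbb{1}_{34}+\frac{\epsilon d-1}{d}\left(\mathbb{1}_{12}\otimes F_{34}+F_{12}\otimes\mathbb{1}_{34}\right)+\frac{1-2\epsilon d+\delta d^2}{d^2}F_{12}\otimes F_{34},$$ and assume $\rho$ is positive semidefinite. If either $$\Bigl(1-\frac{2}{d}\Bigr)^2+\min(4\epsilon,0)+\min(2\delta,0)\geq 0$$ or $$d^2+\min\bigl(4d(\epsilon d-1),0\bigr)+\min\bigl(2(\delta d^2-1),0\bigr)\geq 0,$$ then $\rho$ is 1-undistillable, i.e. $\langle\psi|\rho^{T_B}|\psi\rangle\geq 0$ for every vector $|\psi\rangle\in\mathcal{H}_A\otimes\mathcal{H}_B$ of Schmidt rank at most $2$ with respect to the split $A|B$.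
   Context: $F_{ij}$ denotes the swap operator $\sum_{k,l}|kl\rangle\langle lk|$ exchanging $\mathcal{H}_i$ and $\mathcal{H}_j$, and $\mathbb{1}_{ij}$ the identity on $\mathcal{H}_i\otimes\mathcal{H}_j$. $\rho^{T_B}$ denotes the partial transpose with respect to Bob's system $\mathcal{H}_2\otimes\mathcal{H}_4$ in the computational basis. *)

theory Defs
  imports Complex_Main "HOL-Library.Complex_Order"
begin

text \<open>A basis vector of
  H1 (x) H2 (x) H3 (x) H4 is indexed by a tuple (i1,i2,i3,i4).
  Vectors are functions on index tuples (only values on the index set matter),
  operators are matrices indexed by pairs of index tuples.\<close>

type_synonym idx4 = "nat \<times> nat \<times> nat \<times> nat"
type_synonym vec4 = "idx4 \<Rightarrow> complex"
type_synonym op4 = "idx4 \<Rightarrow> idx4 \<Rightarrow> complex"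
type_synonym op2 = "nat \<times> nat \<Rightarrow> nat \<times> nat \<Rightarrow> complex"

definition Idx :: "nat \<Rightarrow> idx4 set" where
  "Idx d = {..<d} \<times> {..<d} \<times> {..<d} \<times> {..<d}"

definition kd :: "nat \<Rightarrow> nat \<Rightarrow> complex" where
  "kd a b = (if a = b then 1 else 0)"

definition id2 :: op2 where
  "id2 = (\<lambda>(i,j) (k,l). kd i k * kd j l)"

definition swap2 :: op2 where
  "swap2 = (\<lambda>(i,j) (k,l). kd i l * kd j k)"

definition tens :: "op2 \<Rightarrow> op2 \<Rightarrow> op4" where
  "tens A B = (\<lambda>(x1,x2,x3,x4) (y1,y2,y3,y4). A (x1,x2) (y1,y2) * B (x3,x4) (y3,y4))"

definition rho :: "nat \<Rightarrow> real \<Rightarrow> real \<Rightarrow> op4" where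
  "rho d \<epsilon> \<delta> = (\<lambda>x y.
      tens id2 id2 x y
    + complex_of_real ((\<epsilon> * real d - 1) / real d) * (tens id2 swap2 x y + tens swap2 id2 x y)
    + complex_of_real ((1 - 2 * \<epsilon> * real d + \<delta> * (real d)^2) / (real d)^2) * tens swap2 swap2 x y)"

definition qform :: "nat \<Rightarrow> op4 \<Rightarrow> vec4 \<Rightarrow> complex" where
  "qform d M \<psi> = (\<Sum>x\<in>Idx d. \<Sum>y\<in>Idx d. cnj (\<psi> x) * M x y * \<psi> y)"

text \<open>Positive semidefinite: <psi|M|psi> is real and nonnegative for all psi
  (complex order from HOL-Library.Complex_Order).\<close>
definition psd :: "nat \<Rightarrow> op4 \<Rightarrow> bool" where
  "psd d M = (\<forall>\<psi>. 0 \<le> qform d M \<psi>)"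

definition ptB :: "op4 \<Rightarrow> op4" where
  "ptB M = (\<lambda>(x1,x2,x3,x4) (y1,y2,y3,y4). M (x1,y2,x3,y4) (y1,x2,y3,x4))"

definition schmidt_rank :: "nat \<Rightarrow> vec4 \<Rightarrow> nat" where
  "schmidt_rank d \<psi> = (LEAST r. \<exists>a b :: nat \<Rightarrow> nat \<times> nat \<Rightarrow> complex.
      \<forall>(x1,x2,x3,x4)\<in>Idx d. \<psi> (x1,x2,x3,x4) = (\<Sum>k<r. a k (x1,x3) * b k (x2,x4)))"

definition one_undistillable :: "nat \<Rightarrow> op4 \<Rightarrow> bool" where
  "one_undistillable d M = (\<forall>\<psi>. schmidt_rank d \<psi> \<le> 2 \<longrightarrow> 0 \<le> qform d (ptB M) \<psi>)"

end

theory Submission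
  imports Defs
begin


lemma kd_sum1[simp]: "(\<Sum>y<d. A * kd x y * f y) = (if x < d then A * f x else 0)"
proof -
  have "(\<Sum>y<d. A * kd x y * f y) = (\<Sum>y\<in>{..<d}. if x = y then A * f y else 0)"
    by (rule sum.cong) (auto simp: kd_def)
  also have "\<dots> = (if x \<in> {..<d} then A * f x else 0)" by (rule sum.delta'[OF finite_lessThan])
  finally show ?thesis by simp
qed
lemma kd_sum2[simp]: "(\<Sum>y<d. A * kd y x * f y) = (if x < d then A * f x else 0)"
proof -
  have "(\<Sum>y<d. A * kd y x * f y) = (\<Sum>y\<in>{..<d}. if x = y then A * f y else 0)"
    by (rule sum.cong) (auto simp: kd_def)
  also have "\<dots> = (if x \<in> {..<d} then A * f x else 0)" by (rule sum.delta'[OF finite_lessThan])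
  finally show ?thesis by simp
qed
lemma kd_sum3[simp]: "(\<Sum>y<d. kd x y * f y) = (if x < d then f x else 0)"
  using kd_sum1[of 1 x f d] by simp
lemma kd_sum4[simp]: "(\<Sum>y<d. kd y x * f y) = (if x < d then f x else 0)"
  using kd_sum2[of 1 x f d] by simp


lemma kd_sym: "kd a b = kd b a" by (simp add: kd_def)

lemmas pull = sum_distrib_left[symmetric]

lemma t1: "x1 < d \<Longrightarrow> x2 < d \<Longrightarrow> x3 < d \<Longrightarrow> x4 < d \<Longrightarrow>
  (\<Sum>y1<d. \<Sum>y2<d. \<Sum>y3<d. \<Sum>y4<d. kd x1 y1 * kd x2 y2 * kd x3 x4 * kd y3 y4 * g (y1,y2,y3,y4)) = kd x3 x4 * (\<Sum>l<d. g (x1,x2,l,l))"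
  by (simp add: mult.assoc pull del: kd_sum1 kd_sum2)
lemma t2: "x1 < d \<Longrightarrow> x2 < d \<Longrightarrow> x3 < d \<Longrightarrow> x4 < d \<Longrightarrow>
  (\<Sum>y1<d. \<Sum>y2<d. \<Sum>y3<d. \<Sum>y4<d. kd x1 x2 * kd y1 y2 * kd x3 x4 * kd y3 y4 * g (y1,y2,y3,y4)) = kd x1 x2 * kd x3 x4 * (\<Sum>k<d. \<Sum>l<d. g (k,k,l,l))"
  by (simp add: mult.assoc pull del: kd_sum1 kd_sum2)
lemma t3: "x1 < d \<Longrightarrow> x2 < d \<Longrightarrow> x3 < d \<Longrightarrow> x4 < d \<Longrightarrow>
  (\<Sum>y1<d. \<Sum>y2<d. \<Sum>y3<d. \<Sum>y4<d. kd x1 y1 * kd x2 y2 * kd x3 y3 * kd x4 y4 * g (y1,y2,y3,y4)) = g (x1,x2,x3,x4)"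
  by (simp add: mult.assoc pull del: kd_sum1 kd_sum2)
lemma t4: "x1 < d \<Longrightarrow> x2 < d \<Longrightarrow> x3 < d \<Longrightarrow> x4 < d \<Longrightarrow>
  (\<Sum>y1<d. \<Sum>y2<d. \<Sum>y3<d. \<Sum>y4<d. kd x1 x2 * kd y1 y2 * kd x3 y3 * kd x4 y4 * g (y1,y2,y3,y4)) = kd x1 x2 * (\<Sum>k<d. g (k,k,x3,x4))"
  by (simp add: mult.assoc pull del: kd_sum1 kd_sum2)

lemma o4: "(\<Sum>x1<d. \<Sum>x2<d. \<Sum>x3<d. \<Sum>x4<d. cnj (g (x1,x2,x3,x4)) * (kd x1 x2 * U x3 x4))
   = (\<Sum>x3<d. \<Sum>x4<d. cnj (\<Sum>k<d. g (k,k,x3,x4)) * U x3 x4)"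
proof -
  have "(\<Sum>x1<d. \<Sum>x2<d. \<Sum>x3<d. \<Sum>x4<d. cnj (g (x1,x2,x3,x4)) * (kd x1 x2 * U x3 x4))
     = (\<Sum>x1<d. \<Sum>x2<d. kd x1 x2 * (\<Sum>x3<d. \<Sum>x4<d. cnj (g (x1,x2,x3,x4)) * U x3 x4))"
    by (simp add: sum_distrib_left ac_simps)
  also have "\<dots> = (\<Sum>x1<d. \<Sum>x3<d. \<Sum>x4<d. cnj (g (x1,x1,x3,x4)) * U x3 x4)"
    by (simp del: kd_sum1 kd_sum2)
  also have "\<dots> = (\<Sum>x3<d. \<Sum>x4<d. \<Sum>x1<d. cnj (g (x1,x1,x3,x4)) * U x3 x4)"
    by (subst sum.swap) (subst (2) sum.swap, rule refl)
  also have "\<dots> = (\<Sum>x3<d. \<Sum>x4<d. cnj (\<Sum>k<d. g (k,k,x3,x4)) * U x3 x4)"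
    by (simp add: sum_distrib_right cnj_sum)
  finally show ?thesis .
qed
lemma o1: "(\<Sum>x1<d. \<Sum>x2<d. \<Sum>x3<d. \<Sum>x4<d. cnj (g (x1,x2,x3,x4)) * (kd x3 x4 * U x1 x2))
   = (\<Sum>x1<d. \<Sum>x2<d. cnj (\<Sum>l<d. g (x1,x2,l,l)) * U x1 x2)"
proof -
  have "(\<Sum>x1<d. \<Sum>x2<d. \<Sum>x3<d. \<Sum>x4<d. cnj (g (x1,x2,x3,x4)) * (kd x3 x4 * U x1 x2))
     = (\<Sum>x1<d. \<Sum>x2<d. \<Sum>x3<d. cnj (g (x1,x2,x3,x3)) * U x1 x2)"
    by (simp add: ac_simps del: kd_sum1 kd_sum2)
  also have "\<dots> = (\<Sum>x1<d. \<Sum>x2<d. cnj (\<Sum>l<d. g (x1,x2,l,l)) * U x1 x2)"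
    by (simp add: sum_distrib_right cnj_sum)
  finally show ?thesis .
qed
lemma o2: "(\<Sum>x1<d. \<Sum>x2<d. \<Sum>x3<d. \<Sum>x4<d. cnj (g (x1,x2,x3,x4)) * (kd x1 x2 * kd x3 x4 * c))
   = cnj (\<Sum>k<d. \<Sum>l<d. g (k,k,l,l)) * c"
proof -
  have "(\<Sum>x1<d. \<Sum>x2<d. \<Sum>x3<d. \<Sum>x4<d. cnj (g (x1,x2,x3,x4)) * (kd x1 x2 * kd x3 x4 * c))
     = (\<Sum>x1<d. \<Sum>x3<d. cnj (g (x1,x1,x3,x3)) * c)"
    by (simp add: ac_simps pull del: kd_sum1 kd_sum2)
  also have "\<dots> = cnj (\<Sum>k<d. \<Sum>l<d. g (k,k,l,l)) * c"
    by (simp add: sum_distrib_right cnj_sum)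
  finally show ?thesis .
qed

lemma cnj_mult_self: "cnj z * z = complex_of_real ((cmod z)\<^sup>2)"
  by (metis complex_norm_square mult.commute)

definition SS :: "nat \<Rightarrow> vec4 \<Rightarrow> real" where
  "SS d \<psi> = (\<Sum>x1<d. \<Sum>x2<d. \<Sum>x3<d. \<Sum>x4<d. (cmod (\<psi> (x1,x2,x3,x4)))\<^sup>2)"
definition uu :: "nat \<Rightarrow> vec4 \<Rightarrow> nat \<Rightarrow> nat \<Rightarrow> complex" where
  "uu d \<psi> x3 x4 = (\<Sum>k<d. \<psi> (k,k,x3,x4))"
definition tt :: "nat \<Rightarrow> vec4 \<Rightarrow> nat \<Rightarrow> nat \<Rightarrow> complex" where
  "tt d \<psi> x1 x2 = (\<Sum>l<d. \<psi> (x1,x2,l,l))"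
definition N12 :: "nat \<Rightarrow> vec4 \<Rightarrow> real" where
  "N12 d \<psi> = (\<Sum>x3<d. \<Sum>x4<d. (cmod (uu d \<psi> x3 x4))\<^sup>2)"
definition N34 :: "nat \<Rightarrow> vec4 \<Rightarrow> real" where
  "N34 d \<psi> = (\<Sum>x1<d. \<Sum>x2<d. (cmod (tt d \<psi> x1 x2))\<^sup>2)"
definition TT :: "nat \<Rightarrow> vec4 \<Rightarrow> complex" where
  "TT d \<psi> = (\<Sum>k<d. \<Sum>l<d. \<psi> (k,k,l,l))"

definition opE :: op4 where "opE = (\<lambda>(x1,x2,x3,x4) (y1,y2,y3,y4). kd x1 y1 * kd x2 y2 * kd x3 y3 * kd x4 y4)"
definition opG :: op4 where "opG = (\<lambda>(x1,x2,x3,x4) (y1,y2,y3,y4). kd x1 y1 * kd x2 y2 * kd x3 x4 * kd y3 y4)"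
definition opH :: op4 where "opH = (\<lambda>(x1,x2,x3,x4) (y1,y2,y3,y4). kd x1 x2 * kd y1 y2 * kd x3 y3 * kd x4 y4)"
definition opK :: op4 where "opK = (\<lambda>(x1,x2,x3,x4) (y1,y2,y3,y4). kd x1 x2 * kd y1 y2 * kd x3 x4 * kd y3 y4)"

lemma sum_Idx: "(\<Sum>x\<in>Idx d. f x) = (\<Sum>x1<d. \<Sum>x2<d. \<Sum>x3<d. \<Sum>x4<d. f (x1,x2,x3,x4))"
  unfolding Idx_def by (simp add: sum.cartesian_product)

lemma qform_nested: "qform d M \<psi> = (\<Sum>x1<d. \<Sum>x2<d. \<Sum>x3<d. \<Sum>x4<d. cnj (\<psi> (x1,x2,x3,x4)) *
   (\<Sum>y1<d. \<Sum>y2<d. \<Sum>y3<d. \<Sum>y4<d. M (x1,x2,x3,x4) (y1,y2,y3,y4) * \<psi> (y1,y2,y3,y4)))"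
  by (simp add: qform_def sum_Idx sum_distrib_left mult.assoc)

lemma ptB_rho_eq: "ptB (rho d e f) = (\<lambda>x y. opE x y + complex_of_real ((e * real d - 1) / real d) * (opG x y + opH x y)
   + complex_of_real ((1 - 2 * e * real d + f * (real d)^2) / (real d)^2) * opK x y)"
  by (auto simp: fun_eq_iff ptB_def rho_def tens_def id2_def swap2_def opE_def opG_def opH_def opK_def kd_sym mult.assoc)

lemma qform_lin: "qform d (\<lambda>x y. A x y + c * (B x y + C x y) + c' * D x y) \<psi>
   = qform d A \<psi> + c * (qform d B \<psi> + qform d C \<psi>) + c' * qform d D \<psi>"
  by (simp add: qform_def algebra_simps sum.distrib sum_distrib_left)

lemma qf_E: "qform d opE \<psi> = complex_of_real (SS d \<psi>)"
  by (simp add: qform_nested opE_def t3 SS_def cnj_mult_self del: kd_sum1 kd_sum2 kd_sum3 kd_sum4)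
lemma qf_G: "qform d opG \<psi> = complex_of_real (N34 d \<psi>)"
proof -
  have "qform d opG \<psi> = (\<Sum>x1<d. \<Sum>x2<d. \<Sum>x3<d. \<Sum>x4<d. cnj (\<psi> (x1,x2,x3,x4)) * (kd x3 x4 * tt d \<psi> x1 x2))"
    by (simp add: qform_nested opG_def t1 tt_def del: kd_sum1 kd_sum2 kd_sum3 kd_sum4)
  also have "\<dots> = complex_of_real (N34 d \<psi>)"
    by (simp only: o1) (simp add: N34_def tt_def[symmetric] cnj_mult_self)
  finally show ?thesis .
qed
lemma qf_H: "qform d opH \<psi> = complex_of_real (N12 d \<psi>)"
proof -
  have "qform d opH \<psi> = (\<Sum>x1<d. \<Sum>x2<d. \<Sum>x3<d. \<Sum>x4<d. cnj (\<psi> (x1,x2,x3,x4)) * (kd x1 x2 * uu d \<psi> x3 x4))"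
    by (simp add: qform_nested opH_def t4 uu_def del: kd_sum1 kd_sum2 kd_sum3 kd_sum4)
  also have "\<dots> = complex_of_real (N12 d \<psi>)"
    by (simp only: o4) (simp add: N12_def uu_def[symmetric] cnj_mult_self)
  finally show ?thesis .
qed
lemma qf_K: "qform d opK \<psi> = complex_of_real ((cmod (TT d \<psi>))\<^sup>2)"
proof -
  have "qform d opK \<psi> = (\<Sum>x1<d. \<Sum>x2<d. \<Sum>x3<d. \<Sum>x4<d. cnj (\<psi> (x1,x2,x3,x4)) * (kd x1 x2 * kd x3 x4 * TT d \<psi>))"
    by (simp add: qform_nested opK_def t2 TT_def del: kd_sum1 kd_sum2 kd_sum3 kd_sum4)
  also have "\<dots> = complex_of_real ((cmod (TT d \<psi>))\<^sup>2)"
    by (simp only: o2) (simp add: TT_def[symmetric] cnj_mult_self)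
  finally show ?thesis .
qed

lemma qform_main: "qform d (ptB (rho d e f)) \<psi> = complex_of_real (SS d \<psi>
   + ((e * real d - 1) / real d) * (N12 d \<psi> + N34 d \<psi>)
   + ((1 - 2 * e * real d + f * (real d)^2) / (real d)^2) * (cmod (TT d \<psi>))\<^sup>2)"
  by (simp only: ptB_rho_eq qform_lin qf_E qf_G qf_H qf_K) (simp add: algebra_simps)


lemma real_CS:
  fixes a b :: "'a \<Rightarrow> real"
  shows "(\<Sum>i\<in>I. a i * b i)\<^sup>2 \<le> (\<Sum>i\<in>I. (a i)\<^sup>2) * (\<Sum>i\<in>I. (b i)\<^sup>2)"
proof (cases "(\<Sum>i\<in>I. (b i)\<^sup>2) > 0")
  case False
  then consider "\<And>i. i\<in>I \<Longrightarrow> b i = 0" | "infinite I"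
    by (metis (mono_tags, lifting) sum_pos2 zero_le_power2 zero_less_power2)
  thus ?thesis by fastforce
next
  case True
  define r where "r = (\<Sum>i\<in>I. a i * b i) / (\<Sum>i\<in>I. (b i)\<^sup>2)"
  have "0 \<le> (\<Sum>i\<in>I. (a i - r * b i)\<^sup>2)"
    by (simp add: sum_nonneg)
  also have "\<dots> = (\<Sum>i\<in>I. (a i)\<^sup>2) - 2 * r * (\<Sum>i\<in>I. a i * b i) + r\<^sup>2 * (\<Sum>i\<in>I. (b i)\<^sup>2)"
    by (simp add: algebra_simps power2_eq_square sum_distrib_left flip: sum.distrib)
  also have "\<dots> = (\<Sum>i\<in>I. (a i)\<^sup>2) - ((\<Sum>i\<in>I. a i * b i))\<^sup>2 / (\<Sum>i\<in>I. (b i)\<^sup>2)"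
    using True by (simp add: r_def power2_eq_square field_simps)
  finally have "((\<Sum>i\<in>I. a i * b i))\<^sup>2 / (\<Sum>i\<in>I. (b i)\<^sup>2) \<le> (\<Sum>i\<in>I. (a i)\<^sup>2)"
    by simp
  thus ?thesis using True by (simp add: pos_divide_le_eq)
qed

lemma complex_CS:
  fixes f g :: "'a \<Rightarrow> complex"
  shows "(cmod (\<Sum>i\<in>I. f i * g i))\<^sup>2 \<le> (\<Sum>i\<in>I. (cmod (f i))\<^sup>2) * (\<Sum>i\<in>I. (cmod (g i))\<^sup>2)"
proof -
  have "cmod (\<Sum>i\<in>I. f i * g i) \<le> (\<Sum>i\<in>I. cmod (f i) * cmod (g i))"
    by (metis (no_types, lifting) norm_mult norm_sum sum.cong)
  hence "(cmod (\<Sum>i\<in>I. f i * g i))\<^sup>2 \<le> (\<Sum>i\<in>I. cmod (f i) * cmod (g i))\<^sup>2"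
    by (simp add: power_mono)
  also have "\<dots> \<le> (\<Sum>i\<in>I. (cmod (f i))\<^sup>2) * (\<Sum>i\<in>I. (cmod (g i))\<^sup>2)"
    by (rule real_CS)
  finally show ?thesis .
qed

lemma cmod_sq_of: "complex_of_real ((cmod z)\<^sup>2) = z * cnj z"
  by (rule complex_norm_square)

lemma cmod_add_sq: "(cmod (a + b))\<^sup>2 \<le> 2 * (cmod a)\<^sup>2 + 2 * (cmod b)\<^sup>2"
proof -
  have "cmod (a + b) \<le> cmod a + cmod b" by (rule norm_triangle_ineq)
  hence "(cmod (a + b))\<^sup>2 \<le> (cmod a + cmod b)\<^sup>2" by (simp add: power_mono)
  also have "\<dots> \<le> 2 * (cmod a)\<^sup>2 + 2 * (cmod b)\<^sup>2"
    by (smt (verit) power2_sum sum_squares_bound)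
  finally show ?thesis .
qed

lemma rank2_orth:
  fixes A B R R' :: "'a \<Rightarrow> complex"
  assumes orth: "(\<Sum>y\<in>I. R' y * cnj (R y)) = 0"
  shows "(cmod (\<Sum>l\<in>I. A l * R l + B l * R' l))\<^sup>2 \<le> 2 * (\<Sum>x\<in>I. \<Sum>y\<in>I. (cmod (A x * R y + B x * R' y))\<^sup>2)"
proof -
  have orth2: "(\<Sum>y\<in>I. R y * cnj (R' y)) = 0"
  proof -
    have "(\<Sum>y\<in>I. R y * cnj (R' y)) = cnj (\<Sum>y\<in>I. R' y * cnj (R y))" by (simp add: cnj_sum mult.commute)
    thus ?thesis using orth by simp
  qed
  have e: "complex_of_real (\<Sum>x\<in>I. \<Sum>y\<in>I. (cmod (A x * R y + B x * R' y))\<^sup>2)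
      = complex_of_real ((\<Sum>x\<in>I. (cmod (A x))\<^sup>2) * (\<Sum>y\<in>I. (cmod (R y))\<^sup>2)
         + (\<Sum>x\<in>I. (cmod (B x))\<^sup>2) * (\<Sum>y\<in>I. (cmod (R' y))\<^sup>2))"
  proof -
    have "complex_of_real (\<Sum>x\<in>I. \<Sum>y\<in>I. (cmod (A x * R y + B x * R' y))\<^sup>2)
       = (\<Sum>x\<in>I. \<Sum>y\<in>I. (A x * cnj (A x)) * (R y * cnj (R y)) + (B x * cnj (B x)) * (R' y * cnj (R' y))
           + (A x * cnj (B x)) * (R y * cnj (R' y)) + (B x * cnj (A x)) * (R' y * cnj (R y)))"
      by (simp add: of_real_sum cmod_sq_of algebra_simps del: of_real_power)
    also have "\<dots> = (\<Sum>x\<in>I. A x * cnj (A x)) * (\<Sum>y\<in>I. R y * cnj (R y)) + (\<Sum>x\<in>I. B x * cnj (B x)) * (\<Sum>y\<in>I. R' y * cnj (R' y))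
           + (\<Sum>x\<in>I. A x * cnj (B x)) * (\<Sum>y\<in>I. R y * cnj (R' y)) + (\<Sum>x\<in>I. B x * cnj (A x)) * (\<Sum>y\<in>I. R' y * cnj (R y))"
      by (simp add: sum.distrib sum_product)
    also have "\<dots> = complex_of_real ((\<Sum>x\<in>I. (cmod (A x))\<^sup>2) * (\<Sum>y\<in>I. (cmod (R y))\<^sup>2)
         + (\<Sum>x\<in>I. (cmod (B x))\<^sup>2) * (\<Sum>y\<in>I. (cmod (R' y))\<^sup>2))"
      by (simp add: orth orth2 of_real_sum cmod_sq_of del: of_real_power)
    finally show ?thesis .
  qed
  hence e': "(\<Sum>x\<in>I. \<Sum>y\<in>I. (cmod (A x * R y + B x * R' y))\<^sup>2)
      = (\<Sum>x\<in>I. (cmod (A x))\<^sup>2) * (\<Sum>y\<in>I. (cmod (R y))\<^sup>2)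
         + (\<Sum>x\<in>I. (cmod (B x))\<^sup>2) * (\<Sum>y\<in>I. (cmod (R' y))\<^sup>2)"
    using of_real_eq_iff by blast
  have "(cmod (\<Sum>l\<in>I. A l * R l + B l * R' l))\<^sup>2 = (cmod ((\<Sum>l\<in>I. A l * R l) + (\<Sum>l\<in>I. B l * R' l)))\<^sup>2"
    by (simp add: sum.distrib)
  also have "\<dots> \<le> 2 * (cmod (\<Sum>l\<in>I. A l * R l))\<^sup>2 + 2 * (cmod (\<Sum>l\<in>I. B l * R' l))\<^sup>2"
    by (rule cmod_add_sq)
  also have "\<dots> \<le> 2 * ((\<Sum>x\<in>I. (cmod (A x))\<^sup>2) * (\<Sum>y\<in>I. (cmod (R y))\<^sup>2))
         + 2 * ((\<Sum>x\<in>I. (cmod (B x))\<^sup>2) * (\<Sum>y\<in>I. (cmod (R' y))\<^sup>2))"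
    using complex_CS[of A R I] complex_CS[of B R' I] by linarith
  also have "\<dots> = 2 * (\<Sum>x\<in>I. \<Sum>y\<in>I. (cmod (A x * R y + B x * R' y))\<^sup>2)"
    using e' by simp
  finally show ?thesis .
qed

lemma rank2_trace:
  fixes P0 P1 R0 R1 :: "'a \<Rightarrow> complex"
  assumes fin: "finite I"
  shows "(cmod (\<Sum>l\<in>I. P0 l * R0 l + P1 l * R1 l))\<^sup>2 \<le> 2 * (\<Sum>x\<in>I. \<Sum>y\<in>I. (cmod (P0 x * R0 y + P1 x * R1 y))\<^sup>2)"
proof -
  define n0 where "n0 = (\<Sum>y\<in>I. R0 y * cnj (R0 y))"
  define \<gamma> where "\<gamma> = (\<Sum>y\<in>I. R1 y * cnj (R0 y)) / n0"
  define R' where "R' = (\<lambda>y. R1 y - \<gamma> * R0 y)"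
  define A where "A = (\<lambda>x. P0 x + \<gamma> * P1 x)"
  have orth: "(\<Sum>y\<in>I. R' y * cnj (R0 y)) = 0"
  proof (cases "n0 = 0")
    case True
    have "n0 = complex_of_real (\<Sum>y\<in>I. (cmod (R0 y))\<^sup>2)" by (simp only: n0_def of_real_sum cmod_sq_of)
    with True have "complex_of_real (\<Sum>y\<in>I. (cmod (R0 y))\<^sup>2) = 0" by (simp only:)
    hence "(\<Sum>y\<in>I. (cmod (R0 y))\<^sup>2) = 0" by (simp only: of_real_eq_0_iff)
    hence "\<forall>y\<in>I. (cmod (R0 y))\<^sup>2 = 0" using fin by (simp add: sum_nonneg_eq_0_iff)
    hence "\<forall>y\<in>I. R0 y = 0" by simp
    thus ?thesis by simp
  next
    case False
    have "(\<Sum>y\<in>I. R' y * cnj (R0 y)) = (\<Sum>y\<in>I. R1 y * cnj (R0 y)) - \<gamma> * n0"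
      by (simp add: R'_def n0_def algebra_simps sum_subtractf sum_distrib_left)
    thus ?thesis using False by (simp add: \<gamma>_def)
  qed
  have eq: "\<And>x y. P0 x * R0 y + P1 x * R1 y = A x * R0 y + P1 x * R' y"
    by (simp add: A_def R'_def algebra_simps)
  show ?thesis
    using rank2_orth[OF orth, of A P1] by (simp only: eq)
qed


lemma lagrange_scalar:
  fixes z :: "nat \<Rightarrow> complex"
  shows "real n * (\<Sum>i<n. (cmod (z i))\<^sup>2) - (cmod (\<Sum>i<n. z i))\<^sup>2
     = (\<Sum>i<n. \<Sum>j<n. (cmod (z i - z j))\<^sup>2) / 2"
proof -
  have "complex_of_real (real n * (\<Sum>i<n. (cmod (z i))\<^sup>2) - (cmod (\<Sum>i<n. z i))\<^sup>2)
     = of_nat n * (\<Sum>i<n. z i * cnj (z i)) - (\<Sum>i<n. z i) * (\<Sum>j<n. cnj (z j))"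
    by (simp add: of_real_sum cmod_sq_of cnj_sum del: of_real_power)
  also have "\<dots> = (\<Sum>i<n. \<Sum>j<n. (z i - z j) * cnj (z i - z j)) / 2"
  proof -
    have "(\<Sum>i<n. \<Sum>j<n. (z i - z j) * cnj (z i - z j))
       = (\<Sum>i<n. \<Sum>j<n. z i * cnj (z i)) + (\<Sum>i<n. \<Sum>j<n. z j * cnj (z j))
         - (\<Sum>i<n. \<Sum>j<n. z i * cnj (z j)) - (\<Sum>i<n. \<Sum>j<n. z j * cnj (z i))"
      by (simp add: algebra_simps sum.distrib sum_subtractf)
    also have "\<dots> = 2 * (of_nat n * (\<Sum>i<n. z i * cnj (z i)) - (\<Sum>i<n. z i) * (\<Sum>j<n. cnj (z j)))"
      by (simp add: sum_product sum.swap[of "\<lambda>i j. z j * cnj (z i)"] algebra_simps sum_distrib_left)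
    finally show ?thesis by simp
  qed
  also have "\<dots> = complex_of_real ((\<Sum>i<n. \<Sum>j<n. (cmod (z i - z j))\<^sup>2) / 2)"
    by (simp add: of_real_sum cmod_sq_of del: of_real_power)
  finally show ?thesis using of_real_eq_iff by blast
qed

lemma para_scalar:
  fixes m x y :: complex
  shows "(cmod m)\<^sup>2 + (cmod x)\<^sup>2 + (cmod y)\<^sup>2 = ((cmod (m - x + y))\<^sup>2 + (cmod (m + x - y))\<^sup>2
     + (cmod (m - \<i> * x - \<i> * y))\<^sup>2 + (cmod (m + \<i> * x + \<i> * y))\<^sup>2) / 4"
proof -
  have "complex_of_real ((cmod m)\<^sup>2 + (cmod x)\<^sup>2 + (cmod y)\<^sup>2) = complex_of_real (((cmod (m - x + y))\<^sup>2 + (cmod (m + x - y))\<^sup>2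
     + (cmod (m - \<i> * x - \<i> * y))\<^sup>2 + (cmod (m + \<i> * x + \<i> * y))\<^sup>2) / 4)"
    by (simp add: cmod_sq_of algebra_simps del: of_real_power)
  thus ?thesis using of_real_eq_iff by blast
qed

definition nrm :: "nat \<Rightarrow> (nat \<Rightarrow> nat \<Rightarrow> complex) \<Rightarrow> real" where
  "nrm d Z = (\<Sum>x<d. \<Sum>y<d. (cmod (Z x y))\<^sup>2)"
definition trc :: "nat \<Rightarrow> (nat \<Rightarrow> nat \<Rightarrow> complex) \<Rightarrow> complex" where
  "trc d Z = (\<Sum>l<d. Z l l)"
definition qq :: "nat \<Rightarrow> (nat \<Rightarrow> nat \<Rightarrow> complex) \<Rightarrow> real" where
  "qq d Z = nrm d Z - (cmod (trc d Z))\<^sup>2 / 2"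

lemma qq_nonneg:
  assumes "\<And>x y. Z x y = pa x * ra y + pb x * rb y"
  shows "0 \<le> qq d Z"
  using rank2_trace[of "{..<d}" pa ra pb rb] assms
  by (simp add: qq_def nrm_def trc_def)

lemma swap3: "(\<Sum>i\<in>A. \<Sum>x\<in>B. \<Sum>y\<in>C. f i x y) = (\<Sum>x\<in>B. \<Sum>y\<in>C. \<Sum>i\<in>A. f i x y)"
proof -
  have "(\<Sum>i\<in>A. \<Sum>x\<in>B. \<Sum>y\<in>C. f i x y) = (\<Sum>x\<in>B. \<Sum>i\<in>A. \<Sum>y\<in>C. f i x y)" by (rule sum.swap)
  also have "\<dots> = (\<Sum>x\<in>B. \<Sum>y\<in>C. \<Sum>i\<in>A. f i x y)" by (rule sum.cong[OF refl], rule sum.swap)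
  finally show ?thesis .
qed

lemma swap4: "(\<Sum>i\<in>A. \<Sum>j\<in>D. \<Sum>x\<in>B. \<Sum>y\<in>C. f i j x y) = (\<Sum>x\<in>B. \<Sum>y\<in>C. \<Sum>i\<in>A. \<Sum>j\<in>D. f i j x y)"
proof -
  have "(\<Sum>i\<in>A. \<Sum>j\<in>D. \<Sum>x\<in>B. \<Sum>y\<in>C. f i j x y) = (\<Sum>i\<in>A. \<Sum>x\<in>B. \<Sum>y\<in>C. \<Sum>j\<in>D. f i j x y)"
    by (rule sum.cong[OF refl], rule swap3)
  also have "\<dots> = (\<Sum>x\<in>B. \<Sum>y\<in>C. \<Sum>i\<in>A. \<Sum>j\<in>D. f i j x y)" by (rule swap3)
  finally show ?thesis .
qed

lemma lag_nrm: "real n * (\<Sum>i<n. nrm d (Z i)) - nrm d (\<lambda>x y. \<Sum>i<n. Z i x y)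
   = (\<Sum>i<n. \<Sum>j<n. nrm d (\<lambda>x y. Z i x y - Z j x y)) / 2"
proof -
  have s1: "(\<Sum>i<n. nrm d (Z i)) = (\<Sum>x<d. \<Sum>y<d. \<Sum>i<n. (cmod (Z i x y))\<^sup>2)"
    unfolding nrm_def by (rule swap3)
  have "real n * (\<Sum>i<n. nrm d (Z i)) - nrm d (\<lambda>x y. \<Sum>i<n. Z i x y)
     = (\<Sum>x<d. \<Sum>y<d. real n * (\<Sum>i<n. (cmod (Z i x y))\<^sup>2) - (cmod (\<Sum>i<n. Z i x y))\<^sup>2)"
  proof -
    have s2: "real n * (\<Sum>i<n. nrm d (Z i)) = (\<Sum>x<d. \<Sum>y<d. real n * (\<Sum>i<n. (cmod (Z i x y))\<^sup>2))"
      unfolding s1 by (simp add: sum_distrib_left)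
    show ?thesis unfolding s2 by (simp add: nrm_def sum_subtractf)
  qed
  also have "\<dots> = (\<Sum>x<d. \<Sum>y<d. (\<Sum>i<n. \<Sum>j<n. (cmod (Z i x y - Z j x y))\<^sup>2) / 2)"
    by (simp only: lagrange_scalar)
  also have "\<dots> = (\<Sum>i<n. \<Sum>j<n. nrm d (\<lambda>x y. Z i x y - Z j x y)) / 2"
    unfolding nrm_def
    by (simp only: sum_divide_distrib[symmetric]) (rule arg_cong[where f="\<lambda>t. t / 2"], rule swap4[symmetric])
  finally show ?thesis .
qed

lemma lag_trc: "real n * (\<Sum>i<n. (cmod (trc d (Z i)))\<^sup>2) - (cmod (trc d (\<lambda>x y. \<Sum>i<n. Z i x y)))\<^sup>2
   = (\<Sum>i<n. \<Sum>j<n. (cmod (trc d (\<lambda>x y. Z i x y - Z j x y)))\<^sup>2) / 2"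
proof -
  have t1: "trc d (\<lambda>x y. \<Sum>i<n. Z i x y) = (\<Sum>i<n. trc d (Z i))"
    unfolding trc_def by (rule sum.swap)
  have t2: "\<And>i j. trc d (\<lambda>x y. Z i x y - Z j x y) = trc d (Z i) - trc d (Z j)"
    unfolding trc_def by (simp add: sum_subtractf)
  show ?thesis unfolding t1 t2 by (rule lagrange_scalar)
qed

lemma lag_qq: "real n * (\<Sum>i<n. qq d (Z i)) - qq d (\<lambda>x y. \<Sum>i<n. Z i x y)
   = (\<Sum>i<n. \<Sum>j<n. qq d (\<lambda>x y. Z i x y - Z j x y)) / 2"
proof -
  have e1: "(\<Sum>i<n. qq d (Z i)) = (\<Sum>i<n. nrm d (Z i)) - (\<Sum>i<n. (cmod (trc d (Z i)))\<^sup>2) / 2"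
    by (simp only: qq_def sum_subtractf sum_divide_distrib)
  have e2: "(\<Sum>i<n. \<Sum>j<n. qq d (\<lambda>x y. Z i x y - Z j x y)) = (\<Sum>i<n. \<Sum>j<n. nrm d (\<lambda>x y. Z i x y - Z j x y))
      - (\<Sum>i<n. \<Sum>j<n. (cmod (trc d (\<lambda>x y. Z i x y - Z j x y)))\<^sup>2) / 2"
    by (simp only: qq_def sum_subtractf sum_divide_distrib)
  have e3: "real n * (\<Sum>i<n. qq d (Z i)) = real n * (\<Sum>i<n. nrm d (Z i)) - real n * (\<Sum>i<n. (cmod (trc d (Z i)))\<^sup>2) / 2"
    unfolding e1 by (simp add: right_diff_distrib)
  have e4: "qq d (\<lambda>x y. \<Sum>i<n. Z i x y) = nrm d (\<lambda>x y. \<Sum>i<n. Z i x y) - (cmod (trc d (\<lambda>x y. \<Sum>i<n. Z i x y)))\<^sup>2 / 2"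
    by (simp only: qq_def)
  show ?thesis
    using lag_nrm[of n d Z] lag_trc[of n d Z] e2 e3 e4 by linarith
qed

lemma pair_qq: "qq d M + qq d X + qq d Y = (qq d (\<lambda>a b. M a b - X a b + Y a b) + qq d (\<lambda>a b. M a b + X a b - Y a b)
   + qq d (\<lambda>a b. M a b - \<i> * X a b - \<i> * Y a b) + qq d (\<lambda>a b. M a b + \<i> * X a b + \<i> * Y a b)) / 4"
proof -
  have n: "nrm d M + nrm d X + nrm d Y = (nrm d (\<lambda>a b. M a b - X a b + Y a b) + nrm d (\<lambda>a b. M a b + X a b - Y a b)
   + nrm d (\<lambda>a b. M a b - \<i> * X a b - \<i> * Y a b) + nrm d (\<lambda>a b. M a b + \<i> * X a b + \<i> * Y a b)) / 4"
  proof -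
    have "nrm d M + nrm d X + nrm d Y = (\<Sum>x<d. \<Sum>y<d. (cmod (M x y))\<^sup>2 + (cmod (X x y))\<^sup>2 + (cmod (Y x y))\<^sup>2)"
      unfolding nrm_def by (simp add: sum.distrib)
    also have "\<dots> = (\<Sum>x<d. \<Sum>y<d. ((cmod (M x y - X x y + Y x y))\<^sup>2 + (cmod (M x y + X x y - Y x y))\<^sup>2
     + (cmod (M x y - \<i> * X x y - \<i> * Y x y))\<^sup>2 + (cmod (M x y + \<i> * X x y + \<i> * Y x y))\<^sup>2) / 4)"
      by (rule sum.cong[OF refl], rule sum.cong[OF refl], rule para_scalar)
    also have "\<dots> = (nrm d (\<lambda>a b. M a b - X a b + Y a b) + nrm d (\<lambda>a b. M a b + X a b - Y a b)
   + nrm d (\<lambda>a b. M a b - \<i> * X a b - \<i> * Y a b) + nrm d (\<lambda>a b. M a b + \<i> * X a b + \<i> * Y a b)) / 4"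
      unfolding nrm_def by (simp only: sum.distrib sum_divide_distrib add_divide_distrib)
    finally show ?thesis .
  qed
  have tr: "\<And>Z W c. trc d (\<lambda>a b. Z a b + c * W a b) = trc d Z + c * trc d W"
    unfolding trc_def by (simp add: sum.distrib sum_distrib_left)
  have tr2: "\<And>Z W c. trc d (\<lambda>a b. Z a b - c * W a b) = trc d Z - c * trc d W"
    unfolding trc_def by (simp add: sum_subtractf sum_distrib_left)
  have tr3: "\<And>Z W V. trc d (\<lambda>a b. Z a b - W a b + V a b) = trc d Z - trc d W + trc d V"
    unfolding trc_def by (simp add: sum_subtractf sum.distrib)
  have tr4: "\<And>Z W V. trc d (\<lambda>a b. Z a b + W a b - V a b) = trc d Z + trc d W - trc d V"
    unfolding trc_def by (simp add: sum_subtractf sum.distrib)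
  have tr5: "\<And>Z W V c. trc d (\<lambda>a b. Z a b - c * W a b - c * V a b) = trc d Z - c * trc d W - c * trc d V"
    unfolding trc_def by (simp add: sum_subtractf sum_distrib_left)
  have tr6: "\<And>Z W V c. trc d (\<lambda>a b. Z a b + c * W a b + c * V a b) = trc d Z + c * trc d W + c * trc d V"
    unfolding trc_def by (simp add: sum.distrib sum_distrib_left)
  have t: "(cmod (trc d M))\<^sup>2 + (cmod (trc d X))\<^sup>2 + (cmod (trc d Y))\<^sup>2 = ((cmod (trc d (\<lambda>a b. M a b - X a b + Y a b)))\<^sup>2 + (cmod (trc d (\<lambda>a b. M a b + X a b - Y a b)))\<^sup>2
   + (cmod (trc d (\<lambda>a b. M a b - \<i> * X a b - \<i> * Y a b)))\<^sup>2 + (cmod (trc d (\<lambda>a b. M a b + \<i> * X a b + \<i> * Y a b)))\<^sup>2) / 4"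
    unfolding tr3 tr4 tr5 tr6 by (rule para_scalar)
  have aux: "\<And>a1 a2 a3 b1 b2 b3 b4 c1 c2 c3 e1 e2 e3 e4 :: real. a1+a2+a3 = (b1+b2+b3+b4)/4 \<Longrightarrow> c1+c2+c3 = (e1+e2+e3+e4)/4 \<Longrightarrow>
     (a1 - c1/2) + (a2 - c2/2) + (a3 - c3/2) = ((b1 - e1/2) + (b2 - e2/2) + (b3 - e3/2) + (b4 - e4/2))/4"
    by (simp add: field_simps)
  show ?thesis unfolding qq_def by (rule aux[OF n t])
qed


lemma final_arith:
  fixes S N1 N3 t e f D :: real
  assumes D: "D \<ge> 2" and S0: "0 \<le> S" and t0: "0 \<le> t"
    and h1: "N1 \<le> 2 * S" and h2: "N3 \<le> 2 * S" and h3: "t \<le> 2 * S"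
    and h5a: "t \<le> D * N1" and h5b: "t \<le> D * N3"
    and h6: "D * N3 + 2 * N1 \<le> 2 * D * S + t"
    and cond: "(1 - 2 / D)^2 + min (4 * e) 0 + min (2 * f) 0 \<ge> 0
         \<or> D^2 + min (4 * D * (e * D - 1)) 0 + min (2 * (f * D^2 - 1)) 0 \<ge> 0"
  shows "0 \<le> S + ((e * D - 1) / D) * (N1 + N3) + ((1 - 2 * e * D + f * D^2) / D^2) * t"
proof -
  have Dp: "D > 0" using D by simp
  have q1: "t / D \<le> N1" using h5a Dp by (simp add: divide_le_eq mult.commute)
  have q3: "t / D \<le> N3" using h5b Dp by (simp add: divide_le_eq mult.commute)
  have tD: "0 \<le> t / D" using t0 Dp by simp
  from cond show ?thesis
  proof
    assume c1: "(1 - 2 / D)^2 + min (4 * e) 0 + min (2 * f) 0 \<ge> 0"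
    define \<alpha> where "\<alpha> = 1 - 2 / D"
    have al0: "0 \<le> \<alpha>" using D by (simp add: \<alpha>_def field_simps)
    define A where "A = S - N1 / D"
    define B where "B = S - N3 / 2 - N1 / D + t / (2 * D)"
    have A: "\<alpha> * S \<le> A"
    proof -
      have "N1 / D \<le> 2 * S / D" using h1 Dp by (simp add: divide_right_mono)
      thus ?thesis by (simp add: A_def \<alpha>_def algebra_simps)
    qed
    have B: "0 \<le> B"
    proof -
      have "B = (2 * D * S + t - (D * N3 + 2 * N1)) / (2 * D)"
        using Dp by (simp add: B_def field_simps)
      moreover have "0 \<le> (2 * D * S + t - (D * N3 + 2 * N1)) / (2 * D)"
        using h6 Dp by simp
      ultimately show ?thesis by simp
    qed
    have Q1: "S - (N1 + N3) / D + t / D^2 = \<alpha> * A + (2 / D) * B"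
      using Dp by (simp add: \<alpha>_def A_def B_def field_simps power2_eq_square)
    have Q1ge: "\<alpha> * A + (2 / D) * B \<ge> \<alpha>^2 * S"
    proof -
      have "\<alpha> * (\<alpha> * S) \<le> \<alpha> * A" using A al0 by (rule mult_left_mono)
      moreover have "0 \<le> (2 / D) * B" using B Dp by simp
      ultimately show ?thesis by (simp add: power2_eq_square mult.assoc)
    qed
    have E: "e * (N1 + N3 - 2 * t / D) \<ge> min (4 * e) 0 * S"
    proof (cases "e \<ge> 0")
      case True
      have "0 \<le> N1 + N3 - 2 * t / D" using q1 q3 by simp
      hence "0 \<le> e * (N1 + N3 - 2 * t / D)" using True by simp
      thus ?thesis using True by simp
    next
      case False
      have "N1 + N3 - 2 * t / D \<le> 4 * S" using h1 h2 tD by simp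
      hence "e * (4 * S) \<le> e * (N1 + N3 - 2 * t / D)" using False by (simp add: mult_left_mono_neg)
      thus ?thesis using False by simp
    qed
    have F: "f * t \<ge> min (2 * f) 0 * S"
    proof (cases "f \<ge> 0")
      case True thus ?thesis using t0 by simp
    next
      case False
      hence "f * (2 * S) \<le> f * t" using h3 by (simp add: mult_left_mono_neg)
      thus ?thesis using False by simp
    qed
    have eq: "S + ((e * D - 1) / D) * (N1 + N3) + ((1 - 2 * e * D + f * D^2) / D^2) * t
       = (S - (N1 + N3) / D + t / D^2) + e * (N1 + N3 - 2 * t / D) + f * t"
      using Dp by (simp add: field_simps power2_eq_square)
    have "0 \<le> ((1 - 2 / D)^2 + min (4 * e) 0 + min (2 * f) 0) * S"
      using c1 S0 by simp
    also have "\<dots> = \<alpha>^2 * S + min (4 * e) 0 * S + min (2 * f) 0 * S"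
      by (simp add: \<alpha>_def algebra_simps)
    also have "\<dots> \<le> S + ((e * D - 1) / D) * (N1 + N3) + ((1 - 2 * e * D + f * D^2) / D^2) * t"
      unfolding eq Q1 using Q1ge E F by linarith
    finally show ?thesis .
  next
    assume c2: "D^2 + min (4 * D * (e * D - 1)) 0 + min (2 * (f * D^2 - 1)) 0 \<ge> 0"
    define a where "a = (e * D - 1) / D"
    define c where "c = (f * D^2 - 1) / D^2"
    have c2': "1 + min (4 * a) 0 + min (2 * c) 0 \<ge> 0"
    proof -
      have "0 \<le> (D^2 + min (4 * D * (e * D - 1)) 0 + min (2 * (f * D^2 - 1)) 0) / D^2"
        using c2 by simp
      also have "(D^2 + min (4 * D * (e * D - 1)) 0 + min (2 * (f * D^2 - 1)) 0) / D^2
         = 1 + min (4 * D * (e * D - 1)) 0 / D^2 + min (2 * (f * D^2 - 1)) 0 / D^2"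
        using Dp by (simp add: add_divide_distrib)
      also have "min (4 * D * (e * D - 1)) 0 / D^2 = min (4 * a) 0"
        using Dp by (auto simp: a_def min_def field_simps power2_eq_square)
      also have "min (2 * (f * D^2 - 1)) 0 / D^2 = min (2 * c) 0"
        using Dp by (auto simp: c_def min_def field_simps power2_eq_square)
      finally show ?thesis .
    qed
    have Ea: "a * (N1 - t / D) \<ge> min (2 * a) 0 * S" if "N1 - t / D \<le> 2 * S" "0 \<le> N1 - t / D" for N1
    proof (cases "a \<ge> 0")
      case True thus ?thesis using that by simp
    next
      case False
      hence "a * (2 * S) \<le> a * (N1 - t / D)" using that by (simp add: mult_left_mono_neg)
      thus ?thesis using False by simp
    qed
    have E1: "a * (N1 - t / D) \<ge> min (2 * a) 0 * S" using Ea h1 tD q1 by simp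
    have E3: "a * (N3 - t / D) \<ge> min (2 * a) 0 * S" using Ea[of N3] h2 tD q3 by simp
    have F: "c * t \<ge> min (2 * c) 0 * S"
    proof (cases "c \<ge> 0")
      case True thus ?thesis using t0 by simp
    next
      case False
      hence "c * (2 * S) \<le> c * t" using h3 by (simp add: mult_left_mono_neg)
      thus ?thesis using False by simp
    qed
    have eq: "S + ((e * D - 1) / D) * (N1 + N3) + ((1 - 2 * e * D + f * D^2) / D^2) * t
       = S + a * (N1 - t / D) + a * (N3 - t / D) + c * t"
      using Dp by (simp add: a_def c_def field_simps power2_eq_square)
    have m: "min (4 * a) 0 = 2 * min (2 * a) 0" by (simp add: min_def)
    have "0 \<le> (1 + min (4 * a) 0 + min (2 * c) 0) * S" using c2' S0 by simp
    also have "\<dots> = S + min (2 * a) 0 * S + min (2 * a) 0 * S + min (2 * c) 0 * S"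
      unfolding m by (simp add: algebra_simps)
    also have "\<dots> \<le> S + ((e * D - 1) / D) * (N1 + N3) + ((1 - 2 * e * D + f * D^2) / D^2) * t"
      unfolding eq using E1 E3 F by linarith
    finally show ?thesis .
  qed
qed


lemma sum_prod: "(\<Sum>p\<in>A\<times>B. F p) = (\<Sum>x\<in>A. \<Sum>y\<in>B. F (x,y))"
  by (simp add: sum.cartesian_product)

locale rep2 =
  fixes \<psi> :: vec4 and a b :: "nat \<Rightarrow> nat \<times> nat \<Rightarrow> complex"
  assumes rep: "\<And>x1 x2 x3 x4. \<psi> (x1,x2,x3,x4) = a 0 (x1,x3) * b 0 (x2,x4) + a 1 (x1,x3) * b 1 (x2,x4)"
begin

lemma I1: "N12 d \<psi> \<le> 2 * SS d \<psi>"
proof -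
  have pt: "(cmod (uu d \<psi> x3 x4))\<^sup>2 \<le> 2 * (\<Sum>x1<d. \<Sum>x2<d. (cmod (\<psi> (x1,x2,x3,x4)))\<^sup>2)" for x3 x4
    using rank2_trace[of "{..<d}" "\<lambda>l. a 0 (l,x3)" "\<lambda>l. b 0 (l,x4)" "\<lambda>l. a 1 (l,x3)" "\<lambda>l. b 1 (l,x4)"]
    by (simp add: uu_def rep)
  have "N12 d \<psi> \<le> (\<Sum>x3<d. \<Sum>x4<d. 2 * (\<Sum>x1<d. \<Sum>x2<d. (cmod (\<psi> (x1,x2,x3,x4)))\<^sup>2))"
    unfolding N12_def by (intro sum_mono pt)
  also have "\<dots> = 2 * (\<Sum>x3<d. \<Sum>x4<d. \<Sum>x1<d. \<Sum>x2<d. (cmod (\<psi> (x1,x2,x3,x4)))\<^sup>2)"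
    by (simp add: sum_distrib_left)
  also have "\<dots> = 2 * SS d \<psi>"
    unfolding SS_def by (rule arg_cong[where f="\<lambda>t. 2 * t"], rule swap4[symmetric])
  finally show ?thesis .
qed

lemma qqZ: "0 \<le> qq d (\<lambda>x3 x4. \<psi> (x1,x2,x3,x4))"
  by (rule qq_nonneg[where pa="\<lambda>l. a 0 (x1,l)" and ra="\<lambda>l. b 0 (x2,l)" and pb="\<lambda>l. a 1 (x1,l)" and rb="\<lambda>l. b 1 (x2,l)"])
     (simp add: rep)

lemma SS_nrm: "SS d \<psi> = (\<Sum>i<d. \<Sum>j<d. nrm d (\<lambda>x3 x4. \<psi> (i,j,x3,x4)))"
  by (simp add: SS_def nrm_def)
lemma N34_trc: "N34 d \<psi> = (\<Sum>i<d. \<Sum>j<d. (cmod (trc d (\<lambda>x3 x4. \<psi> (i,j,x3,x4))))\<^sup>2)"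
  by (simp add: N34_def trc_def tt_def)

lemma I2: "N34 d \<psi> \<le> 2 * SS d \<psi>"
proof -
  have "0 \<le> (\<Sum>i<d. \<Sum>j<d. qq d (\<lambda>x3 x4. \<psi> (i,j,x3,x4)))"
    by (intro sum_nonneg qqZ)
  also have "\<dots> = SS d \<psi> - N34 d \<psi> / 2"
    by (simp add: qq_def SS_nrm N34_trc sum_subtractf sum_divide_distrib)
  finally show ?thesis by simp
qed

lemma I3: "(cmod (TT d \<psi>))\<^sup>2 \<le> 2 * SS d \<psi>"
proof -
  let ?I = "{..<d} \<times> {..<d}"
  have "TT d \<psi> = (\<Sum>p\<in>?I. a 0 p * b 0 p + a 1 p * b 1 p)"
    by (simp add: TT_def rep sum_prod)
  moreover have "(\<Sum>p\<in>?I. \<Sum>q\<in>?I. (cmod (a 0 p * b 0 q + a 1 p * b 1 q))\<^sup>2)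
      = (\<Sum>x1<d. \<Sum>x3<d. \<Sum>x2<d. \<Sum>x4<d. (cmod (\<psi> (x1,x2,x3,x4)))\<^sup>2)"
    by (simp add: rep sum_prod)
  moreover have "\<dots> = SS d \<psi>"
    unfolding SS_def by (rule sum.cong[OF refl], rule sum.swap)
  ultimately show ?thesis
    using rank2_trace[of ?I "a 0" "b 0" "a 1" "b 1"] by simp
qed


lemma TT_uu: "TT d \<psi> = (\<Sum>l<d. uu d \<psi> l l)"
  unfolding TT_def uu_def by (rule sum.swap)
lemma TT_tt: "TT d \<psi> = (\<Sum>k<d. tt d \<psi> k k)"
  unfolding TT_def tt_def by simp

lemma diag_le: fixes d :: nat shows "(\<Sum>l<d. (cmod (g l l))\<^sup>2) \<le> (\<Sum>x<d. \<Sum>y<d. (cmod (g x y))\<^sup>2)"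
  by (rule sum_mono, rule member_le_sum[where A="{..<d}"]) auto

lemma sum_sq_le: fixes d :: nat shows "(cmod (\<Sum>l<d. z l))\<^sup>2 \<le> real d * (\<Sum>l<d. (cmod (z l))\<^sup>2)"
  using complex_CS[where f=z and g="\<lambda>_. 1" and I="{..<d}"] by (simp add: mult.commute)

lemma I5a: "(cmod (TT d \<psi>))\<^sup>2 \<le> real d * N12 d \<psi>"
  unfolding TT_uu N12_def
  using sum_sq_le[where d=d and z="\<lambda>l. uu d \<psi> l l"] diag_le[where d=d and g="uu d \<psi>"]
  by (meson dual_order.trans mult_left_mono of_nat_0_le_iff)
lemma I5b: "(cmod (TT d \<psi>))\<^sup>2 \<le> real d * N34 d \<psi>"
  unfolding TT_tt N34_def
  using sum_sq_le[where d=d and z="\<lambda>l. tt d \<psi> l l"] diag_le[where d=d and g="tt d \<psi>"]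
  by (meson dual_order.trans mult_left_mono of_nat_0_le_iff)

lemma pairZ: "0 \<le> qq d (\<lambda>x y. \<psi> (i,i,x,y) - \<psi> (j,j,x,y)) + qq d (\<lambda>x y. \<psi> (i,j,x,y)) + qq d (\<lambda>x y. \<psi> (j,i,x,y))"
proof -
  let ?M = "\<lambda>x y. \<psi> (i,i,x,y) - \<psi> (j,j,x,y)"
  let ?X = "\<lambda>x y. \<psi> (i,j,x,y)"
  let ?Y = "\<lambda>x y. \<psi> (j,i,x,y)"
  have n1: "0 \<le> qq d (\<lambda>x y. ?M x y - ?X x y + ?Y x y)"
    by (rule qq_nonneg[where pa="\<lambda>l. a 0 (i,l) + a 0 (j,l)" and ra="\<lambda>l. b 0 (i,l) - b 0 (j,l)"
          and pb="\<lambda>l. a 1 (i,l) + a 1 (j,l)" and rb="\<lambda>l. b 1 (i,l) - b 1 (j,l)"])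
       (simp add: rep algebra_simps)
  have n2: "0 \<le> qq d (\<lambda>x y. ?M x y + ?X x y - ?Y x y)"
    by (rule qq_nonneg[where pa="\<lambda>l. a 0 (i,l) - a 0 (j,l)" and ra="\<lambda>l. b 0 (i,l) + b 0 (j,l)"
          and pb="\<lambda>l. a 1 (i,l) - a 1 (j,l)" and rb="\<lambda>l. b 1 (i,l) + b 1 (j,l)"])
       (simp add: rep algebra_simps)
  have n3: "0 \<le> qq d (\<lambda>x y. ?M x y - \<i> * ?X x y - \<i> * ?Y x y)"
    by (rule qq_nonneg[where pa="\<lambda>l. a 0 (i,l) - \<i> * a 0 (j,l)" and ra="\<lambda>l. b 0 (i,l) - \<i> * b 0 (j,l)"
          and pb="\<lambda>l. a 1 (i,l) - \<i> * a 1 (j,l)" and rb="\<lambda>l. b 1 (i,l) - \<i> * b 1 (j,l)"])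
       (simp add: rep algebra_simps)
  have n4: "0 \<le> qq d (\<lambda>x y. ?M x y + \<i> * ?X x y + \<i> * ?Y x y)"
    by (rule qq_nonneg[where pa="\<lambda>l. a 0 (i,l) + \<i> * a 0 (j,l)" and ra="\<lambda>l. b 0 (i,l) + \<i> * b 0 (j,l)"
          and pb="\<lambda>l. a 1 (i,l) + \<i> * a 1 (j,l)" and rb="\<lambda>l. b 1 (i,l) + \<i> * b 1 (j,l)"])
       (simp add: rep algebra_simps)
  have eq: "qq d ?M + qq d ?X + qq d ?Y = (qq d (\<lambda>x y. ?M x y - ?X x y + ?Y x y) + qq d (\<lambda>x y. ?M x y + ?X x y - ?Y x y)
     + qq d (\<lambda>x y. ?M x y - \<i> * ?X x y - \<i> * ?Y x y) + qq d (\<lambda>x y. ?M x y + \<i> * ?X x y + \<i> * ?Y x y)) / 4"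
    by (rule pair_qq)
  show ?thesis by (subst eq) (use n1 n2 n3 n4 in simp)
qed

end

lemma comb:
  fixes Dv Ov :: "nat \<Rightarrow> nat \<Rightarrow> real"
  assumes p: "\<And>i j. 0 \<le> Dv i j + Ov i j + Ov j i" and z: "\<And>i. Dv i i = 0" and o: "\<And>i j. 0 \<le> Ov i j"
    and d: "1 \<le> d"
  shows "real d * (\<Sum>i<d. Ov i i) - (\<Sum>i<d. \<Sum>j<d. Dv i j) / 2 \<le> real d * (\<Sum>i<d. \<Sum>j<d. Ov i j)"
proof -
  define Q where "Q i j = (if i = j then 0 else Ov i j)" for i j
  have l1: "- Dv i j \<le> Q i j + Q j i" for i j
    using p[of i j] z[of i] by (cases "i = j") (auto simp: Q_def)
  have "- (\<Sum>i<d. \<Sum>j<d. Dv i j) \<le> (\<Sum>i<d. \<Sum>j<d. Q i j + Q j i)"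
    by (simp add: sum_negf[symmetric] sum_mono l1)
  also have "\<dots> = 2 * (\<Sum>i<d. \<Sum>j<d. Q i j)"
    by (simp add: sum.distrib sum.swap[of "\<lambda>i j. Q j i"])
  finally have s1: "- (\<Sum>i<d. \<Sum>j<d. Dv i j) \<le> 2 * (\<Sum>i<d. \<Sum>j<d. Q i j)" .
  have s2: "(\<Sum>i<d. \<Sum>j<d. Ov i j) = (\<Sum>i<d. \<Sum>j<d. Q i j) + (\<Sum>i<d. Ov i i)"
  proof -
    have "(\<Sum>j<d. Ov i j) = (\<Sum>j<d. Q i j) + Ov i i" if "i < d" for i
    proof -
      have "(\<Sum>j<d. Ov i j) = (\<Sum>j<d. Q i j + (if i = j then Ov i j else 0))"
        by (rule sum.cong) (auto simp: Q_def)
      also have "\<dots> = (\<Sum>j<d. Q i j) + Ov i i" using that by (simp add: sum.distrib)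
      finally show ?thesis .
    qed
    thus ?thesis by (simp add: sum.distrib)
  qed
  have s3: "(\<Sum>i<d. Ov i i) \<le> (\<Sum>i<d. \<Sum>j<d. Ov i j)"
    by (intro sum_mono member_le_sum) (auto simp: o)
  have s4: "0 \<le> (\<Sum>i<d. Ov i i)" by (intro sum_nonneg o)
  have "(real d - 1) * (\<Sum>i<d. Ov i i) \<le> (real d - 1) * (\<Sum>i<d. \<Sum>j<d. Ov i j)"
    using s3 d by (intro mult_left_mono) auto
  thus ?thesis using s1 s2 by (simp add: algebra_simps)
qed

context rep2 begin

lemma I6: "real d * N34 d \<psi> + 2 * N12 d \<psi> \<le> 2 * real d * SS d \<psi> + (cmod (TT d \<psi>))\<^sup>2"
proof (cases "d = 0")
  case True thus ?thesis by (simp add: N34_def N12_def SS_def)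
next
  case False
  let ?O = "\<lambda>i j. qq d (\<lambda>x y. \<psi> (i,j,x,y))"
  let ?D = "\<lambda>i j. qq d (\<lambda>x y. \<psi> (i,i,x,y) - \<psi> (j,j,x,y))"
  have lag: "real d * (\<Sum>i<d. ?O i i) - qq d (\<lambda>x y. \<Sum>i<d. \<psi> (i,i,x,y)) = (\<Sum>i<d. \<Sum>j<d. ?D i j) / 2"
    using lag_qq[where n=d and Z="\<lambda>i x y. \<psi> (i,i,x,y)" and d=d] by simp
  have Dz: "?D i i = 0" for i by (simp add: qq_def nrm_def trc_def)
  have c: "real d * (\<Sum>i<d. ?O i i) - (\<Sum>i<d. \<Sum>j<d. ?D i j) / 2 \<le> real d * (\<Sum>i<d. \<Sum>j<d. ?O i j)"
    by (rule comb[where Dv="?D" and Ov="?O"]) (use pairZ Dz qqZ False in auto)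
  have U: "qq d (\<lambda>x y. \<Sum>i<d. \<psi> (i,i,x,y)) = N12 d \<psi> - (cmod (TT d \<psi>))\<^sup>2 / 2"
    by (simp add: qq_def nrm_def trc_def N12_def uu_def TT_uu)
  have O: "(\<Sum>i<d. \<Sum>j<d. ?O i j) = SS d \<psi> - N34 d \<psi> / 2"
    by (simp add: qq_def SS_nrm N34_trc sum_subtractf sum_divide_distrib)
  have "N12 d \<psi> - (cmod (TT d \<psi>))\<^sup>2 / 2 \<le> real d * (SS d \<psi> - N34 d \<psi> / 2)"
    using lag c[unfolded O] U by linarith
  thus ?thesis by (simp add: algebra_simps)
qed

lemma SS_nonneg: "0 \<le> SS d \<psi>" unfolding SS_def by (intro sum_nonneg) auto

end

lemma schmidt_exists: "\<exists>a b :: nat \<Rightarrow> nat \<times> nat \<Rightarrow> complex. \<forall>(x1,x2,x3,x4)\<in>Idx d. \<psi> (x1,x2,x3,x4) = (\<Sum>k<d*d. a k (x1,x3) * b k (x2,x4))"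
proof (intro exI ballI)
  fix x assume x: "x \<in> Idx d"
  obtain x1 x2 x3 x4 where xe: "x = (x1,x2,x3,x4)" by (cases x) auto
  from x xe have l: "x1 < d" "x3 < d" by (auto simp: Idx_def)
  have lt: "x1 * d + x3 < d * d"
  proof -
    have "x1 * d + x3 < (x1 + 1) * d" using l by simp
    also have "\<dots> \<le> d * d" using l by (intro mult_le_mono1) simp
    finally show ?thesis .
  qed
  have dv: "(x1 * d + x3) div d = x1" and md: "(x1 * d + x3) mod d = x3" using l by auto
  have "(\<Sum>k<d*d. (if k = x1 * d + x3 then 1 else 0) * \<psi> (k div d, x2, k mod d, x4))
      = (\<Sum>k<d*d. if x1 * d + x3 = k then \<psi> (k div d, x2, k mod d, x4) else 0)"
    by (rule sum.cong) auto
  also have "\<dots> = \<psi> (x1,x2,x3,x4)" using lt dv md by simp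
  finally show "case x of (x1,x2,x3,x4) \<Rightarrow> \<psi> (x1,x2,x3,x4) = (\<Sum>k<d*d. (\<lambda>k (x1,x3). if k = x1 * d + x3 then 1 else 0) k (x1,x3)
      * (\<lambda>k (x2,x4). \<psi> (k div d, x2, k mod d, x4)) k (x2,x4))"
    by (simp add: xe)
qed

lemma schmidt_rep:
  assumes "schmidt_rank d \<psi> \<le> 2"
  obtains a b :: "nat \<Rightarrow> nat \<times> nat \<Rightarrow> complex" where
    "\<And>x1 x2 x3 x4. (x1,x2,x3,x4) \<in> Idx d \<Longrightarrow> \<psi> (x1,x2,x3,x4) = a 0 (x1,x3) * b 0 (x2,x4) + a 1 (x1,x3) * b 1 (x2,x4)"
proof -
  let ?P = "\<lambda>r. \<exists>a b :: nat \<Rightarrow> nat \<times> nat \<Rightarrow> complex. \<forall>(x1,x2,x3,x4)\<in>Idx d. \<psi> (x1,x2,x3,x4) = (\<Sum>k<r. a k (x1,x3) * b k (x2,x4))"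
  define r0 where "r0 = schmidt_rank d \<psi>"
  have "?P (LEAST r. ?P r)" by (rule LeastI_ex) (use schmidt_exists in blast)
  hence "?P r0" by (simp add: r0_def schmidt_rank_def)
  then obtain a b :: "nat \<Rightarrow> nat \<times> nat \<Rightarrow> complex" where
    ab: "\<forall>(x1,x2,x3,x4)\<in>Idx d. \<psi> (x1,x2,x3,x4) = (\<Sum>k<r0. a k (x1,x3) * b k (x2,x4))" by blast
  have r: "r0 = 0 \<or> r0 = 1 \<or> r0 = 2" using assms r0_def by linarith
  define a' where "a' k = (if k < r0 then a k else (\<lambda>_. 0))" for k
  show ?thesis
  proof (rule that[of a' b])
    fix x1 x2 x3 x4 assume "(x1,x2,x3,x4) \<in> Idx d"
    with ab have "\<psi> (x1,x2,x3,x4) = (\<Sum>k<r0. a k (x1,x3) * b k (x2,x4))" by auto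
    thus "\<psi> (x1,x2,x3,x4) = a' 0 (x1,x3) * b 0 (x2,x4) + a' 1 (x1,x3) * b 1 (x2,x4)"
      using r by (auto simp: a'_def numeral_2_eq_2)
  qed
qed

theorem mainTheorem3:
  fixes d :: nat and \<epsilon> \<delta> :: real
  assumes "d \<ge> 2"
    and "psd d (rho d \<epsilon> \<delta>)"
    and "(1 - 2 / real d)^2 + min (4 * \<epsilon>) 0 + min (2 * \<delta>) 0 \<ge> 0
         \<or> (real d)^2 + min (4 * real d * (\<epsilon> * real d - 1)) 0 + min (2 * (\<delta> * (real d)^2 - 1)) 0 \<ge> 0"
  shows "one_undistillable d (rho d \<epsilon> \<delta>)"
  unfolding one_undistillable_def
proof (intro allI impI)
  fix \<psi> :: vec4
  assume "schmidt_rank d \<psi> \<le> 2"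
  then obtain a b :: "nat \<Rightarrow> nat \<times> nat \<Rightarrow> complex" where
    ab: "\<And>x1 x2 x3 x4. (x1,x2,x3,x4) \<in> Idx d \<Longrightarrow> \<psi> (x1,x2,x3,x4) = a 0 (x1,x3) * b 0 (x2,x4) + a 1 (x1,x3) * b 1 (x2,x4)"
    by (rule schmidt_rep) blast+
  define \<phi> :: vec4 where "\<phi> = (\<lambda>(x1,x2,x3,x4). a 0 (x1,x3) * b 0 (x2,x4) + a 1 (x1,x3) * b 1 (x2,x4))"
  interpret R: rep2 \<phi> a b by unfold_locales (simp add: \<phi>_def)
  have eqv: "\<psi> x = \<phi> x" if "x \<in> Idx d" for x
    using that ab by (cases x) (auto simp: \<phi>_def)
  have qe: "qform d M \<psi> = qform d M \<phi>" for M
    unfolding qform_def by (intro sum.cong refl) (simp add: eqv)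
  have Q: "0 \<le> SS d \<phi> + ((\<epsilon> * real d - 1) / real d) * (N12 d \<phi> + N34 d \<phi>)
     + ((1 - 2 * \<epsilon> * real d + \<delta> * (real d)^2) / (real d)^2) * (cmod (TT d \<phi>))\<^sup>2"
  proof (rule final_arith)
    show "2 \<le> real d" using assms(1) by simp
    show "real d * N34 d \<phi> + 2 * N12 d \<phi> \<le> 2 * real d * SS d \<phi> + (cmod (TT d \<phi>))\<^sup>2" by (rule R.I6)
  qed (use assms(3) R.SS_nonneg R.I1 R.I2 R.I3 R.I5a R.I5b in auto)
  have "qform d (ptB (rho d \<epsilon> \<delta>)) \<psi> = qform d (ptB (rho d \<epsilon> \<delta>)) \<phi>" by (rule qe)
  also have "\<dots> = complex_of_real (SS d \<phi> + ((\<epsilon> * real d - 1) / real d) * (N12 d \<phi> + N34 d \<phi>)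
     + ((1 - 2 * \<epsilon> * real d + \<delta> * (real d)^2) / (real d)^2) * (cmod (TT d \<phi>))\<^sup>2)"
    by (rule qform_main)
  finally show "0 \<le> qform d (ptB (rho d \<epsilon> \<delta>)) \<psi>"
    using Q by (simp add: less_eq_complex_def)
qed

end
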